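(* Let $n\ge3$ and let $\mathcal{M}\subseteq\{1,\dots,n\}$ be a sample set that is a union of twin samples (pairs $\{i,i+1\}$) and contains $1$ and $n$. Let $A=\mathbf{I}_{\mathcal{M}}$, $y\in\mathbb{R}^{|\mathcal{M}|}$, and let $z\in\mathbb{R}^n$ satisfy $Az=y$. Then $z$ is optimal for $\min_{z'\in\mathbb{R}^n}\|Dz'\|_1$ subject to $Az'=y$ if and only if $z$ is sign consistent (with respect to $\mathcal{M}$).
   Context: $D\in\mathbb{R}^{(n-2)\times n}$ is the second-order difference operator, $(Dz)_k=z_k-2z_{k+1}+z_{k+2}$. $\mathbf{I}_{\mathcal{M}}$ consists of the rows of the identity indexed by $\mathcal{M}$, so $Az=z_{\mathcal{M}}$. A twin sample is a pair of consecutive indices $(i,i+1)$, $i\in\{1,\dots,n-1\}$. For $k\in\{2,\dots,n-1\}$ let $s_k=\mathrm{sign}(z_{k-1}-2z_k+z_{k+1})$ (with $\mathrm{sign}(0)=0$). A profile $z$ is sign consistent (with respect to $\mathcal{M}$) if for any two consecutive samples $i<j$ in $\mathcal{M}$ (no element of $\mathcal{M}$ strictly between them) one of the following holds: (i) no sign change: for all $k,h$ with $i\le k,h\le j$ (for which $s_k,s_h$ are defined), if $s_k\ne0$ and $s_h\ne0$ then $s_k=s_h$; (ii) sign change only at the boundary: $s_k=0$ for every $k$ with $i<k<j$. *)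

theory Defs
  imports Complex_Main
begin

text \<open>Vectors in R^n are represented as functions nat => real, using indices 1..n
  (values outside 1..n are irrelevant).\<close>

definition diff2 :: "(nat \<Rightarrow> real) \<Rightarrow> nat \<Rightarrow> real" where
  "diff2 z k = z k - 2 * z (k+1) + z (k+2)"

definition l1_D :: "nat \<Rightarrow> (nat \<Rightarrow> real) \<Rightarrow> real" where
  "l1_D n z = (\<Sum>k=1..n-2. \<bar>diff2 z k\<bar>)"

text \<open>A z = z restricted to M (A = I_M); A z = y with y indexed by the elements of M.\<close>
definition sample_eq :: "nat set \<Rightarrow> (nat \<Rightarrow> real) \<Rightarrow> (nat \<Rightarrow> real) \<Rightarrow> bool" where
  "sample_eq M z y \<longleftrightarrow> (\<forall>i\<in>M. z i = y i)"

definition is_optimal :: "nat \<Rightarrow> nat set \<Rightarrow> (nat \<Rightarrow> real) \<Rightarrow> (nat \<Rightarrow> real) \<Rightarrow> bool" where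
  "is_optimal n M y z \<longleftrightarrow> sample_eq M z y \<and>
     (\<forall>z'. sample_eq M z' y \<longrightarrow> l1_D n z \<le> l1_D n z')"

definition sgn_curv :: "(nat \<Rightarrow> real) \<Rightarrow> nat \<Rightarrow> real" where
  "sgn_curv z k = sgn (z (k-1) - 2 * z k + z (k+1))"

definition twin_union :: "nat \<Rightarrow> nat set \<Rightarrow> bool" where
  "twin_union n M \<longleftrightarrow> (\<exists>T \<subseteq> {1..n-1}. M = (\<Union>i\<in>T. {i, i+1}))"

definition consecutive_samples :: "nat set \<Rightarrow> nat \<Rightarrow> nat \<Rightarrow> bool" where
  "consecutive_samples M i j \<longleftrightarrow> i \<in> M \<and> j \<in> M \<and> i < j \<and> (\<forall>m\<in>M. \<not> (i < m \<and> m < j))"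

definition sign_consistent :: "nat \<Rightarrow> nat set \<Rightarrow> (nat \<Rightarrow> real) \<Rightarrow> bool" where
  "sign_consistent n M z \<longleftrightarrow>
     (\<forall>i j. consecutive_samples M i j \<longrightarrow>
        ((\<forall>k h. i \<le> k \<and> k \<le> j \<and> i \<le> h \<and> h \<le> j \<and>
                 2 \<le> k \<and> k \<le> n-1 \<and> 2 \<le> h \<and> h \<le> n-1 \<and>
                 sgn_curv z k \<noteq> 0 \<and> sgn_curv z h \<noteq> 0 \<longrightarrow> sgn_curv z k = sgn_curv z h)
         \<or> (\<forall>k. i < k \<and> k < j \<longrightarrow> sgn_curv z k = 0)))"

end

theory Submission
  imports Defs
begin


definition cv :: "(nat \<Rightarrow> real) \<Rightarrow> nat \<Rightarrow> real" where
  "cv z k = z (k-1) - 2 * z k + z (k+1)"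

lemma sgn_curv_cv: "sgn_curv z k = sgn (cv z k)"
  by (simp add: sgn_curv_def cv_def)

lemma l1_D_cv: "n \<ge> 3 \<Longrightarrow> l1_D n z = (\<Sum>k=2..n-1. \<bar>cv z k\<bar>)"
proof -
  assume "n \<ge> 3"
  then have e: "n - 1 = Suc (n-2)" by simp
  show ?thesis unfolding l1_D_def e numeral_2_eq_2 sum.shift_bounds_cl_Suc_ivl
    by (simp add: diff2_def cv_def)
qed

lemma tel:
  assumes "1 \<le> i" "i \<le> p+1"
  shows "(\<Sum>k=i..p. cv z k) = (z (p+1) - z p) - (z i - z (i-1))"
  using assms
proof (induction p)
  case 0
  then have "i = 1" by simp
  then show ?case by simp
next
  case (Suc p)
  show ?case
  proof (cases "i \<le> p + 1")
    case True
    then have "{i..Suc p} = insert (Suc p) {i..p}" by auto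
    then show ?thesis using Suc True by (simp add: cv_def)
  next
    case False
    then have "i = Suc p + 1" using Suc by simp
    then show ?thesis by simp
  qed
qed

lemma sum_split_ij:
  fixes f :: "nat \<Rightarrow> real"
  assumes "i \<le> p+1" "p \<le> j"
  shows "sum f {i..j} = sum f {i..p} + sum f {p+1..j}"
  using sum.ub_add_nat[of i p f "j-p"] assms by simp

lemma strict_abs_sum:
  fixes f :: "nat \<Rightarrow> real"
  assumes "finite S" "kp \<in> S" "kn \<in> S" "f kp > 0" "f kn < 0"
  shows "\<bar>sum f S\<bar> < (\<Sum>k\<in>S. \<bar>f k\<bar>)"
proof -
  have 1: "(\<lambda>k. \<bar>f k\<bar> - f k) kn \<le> (\<Sum>k\<in>S. \<bar>f k\<bar> - f k)"
    by (rule member_le_sum) (use assms in auto)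
  have 2: "(\<lambda>k. \<bar>f k\<bar> + f k) kp \<le> (\<Sum>k\<in>S. \<bar>f k\<bar> + f k)"
    by (rule member_le_sum) (use assms in auto)
  have "(\<Sum>k\<in>S. \<bar>f k\<bar> - f k) = (\<Sum>k\<in>S. \<bar>f k\<bar>) - sum f S"
    by (simp add: sum_subtractf)
  moreover have "(\<Sum>k\<in>S. \<bar>f k\<bar> + f k) = (\<Sum>k\<in>S. \<bar>f k\<bar>) + sum f S"
    by (simp add: sum.distrib)
  ultimately show ?thesis using 1 2 assms by auto
qed

lemma exists_pos:
  fixes f :: "nat \<Rightarrow> real"
  assumes "finite S" "sum f S = 0" "x \<in> S" "f x \<noteq> 0"
  shows "\<exists>p\<in>S. f p > 0"
proof (rule ccontr)
  assume "\<not> ?thesis"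
  then have "\<forall>p\<in>S. f p \<le> 0" by auto
  then have "\<forall>p\<in>S. - f p \<ge> 0" by auto
  moreover have "sum (\<lambda>p. - f p) S = 0" using assms(2) by (simp add: sum_negf)
  ultimately have "\<forall>p\<in>S. - f p = 0" using sum_nonneg_eq_0_iff[OF assms(1), of "\<lambda>p. - f p"] by simp
  then have "\<forall>p\<in>S. f p = 0" by simp
  then show False using assms by auto
qed

lemma core:
  fixes z :: "nat \<Rightarrow> real"
  assumes "1 \<le> i" "i+2 \<le> j" "i \<le> kp" "kp \<le> j" "cv z kp > 0" "i \<le> kn" "kn \<le> j" "cv z kn < 0"
    "i < q" "q < j" "cv z q \<noteq> 0"
  shows "(\<Sum>k=i..j. \<bar>cv z k\<bar>) > \<bar>(z j - z i)/(real j - real i) - (z i - z (i-1))\<bar>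
            + \<bar>(z (j+1) - z j) - (z j - z i)/(real j - real i)\<bar>"
proof -
  define mu where "mu = (z j - z i)/(real j - real i)"
  define a where "a = z i - z (i-1)"
  define b where "b = z (j+1) - z j"
  define d where "d p = z (p+1) - z p" for p
  have jr: "real j - real i > 0" using assms by simp
  have total: "(\<Sum>k=i..j. cv z k) = b - a" using tel[of i j z] assms by (simp add: a_def b_def)
  have part: "(\<Sum>k=i..j. \<bar>cv z k\<bar>) \<ge> \<bar>d p - a\<bar> + \<bar>b - d p\<bar>" if "i \<le> p" "p \<le> j" for p
  proof -
    have s1: "(\<Sum>k=i..p. cv z k) = d p - a" using tel[of i p z] assms that by (simp add: a_def d_def)
    have s2: "(\<Sum>k=p+1..j. cv z k) = b - d p"
      using sum_split_ij[of i p j "cv z"] s1 total that by simp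
    have "\<bar>d p - a\<bar> \<le> (\<Sum>k=i..p. \<bar>cv z k\<bar>)" unfolding s1[symmetric] by (rule sum_abs)
    moreover have "\<bar>b - d p\<bar> \<le> (\<Sum>k=p+1..j. \<bar>cv z k\<bar>)" unfolding s2[symmetric] by (rule sum_abs)
    ultimately show ?thesis using sum_split_ij[of i p j "\<lambda>k. \<bar>cv z k\<bar>"] that by simp
  qed
  have dsum: "(\<Sum>p=i..j-1. d p - mu) = 0"
  proof -
    have "(\<Sum>p=i..j-1. d p) = z j - z i"
      using sum_Suc_diff[of i "j-1" z] assms by (simp add: d_def)
    moreover have "card {i..j-1} = j - i" using assms by simp
    moreover have "real (j - i) = real j - real i" using assms by simp
    ultimately show ?thesis using jr by (simp add: sum_subtractf mu_def)
  qed
  have qd: "d q - d (q-1) = cv z q" using assms by (simp add: d_def cv_def)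
  have nz: "\<exists>x\<in>{i..j-1}. d x - mu \<noteq> 0"
  proof (rule ccontr)
    assume "\<not> ?thesis"
    moreover have "q - 1 \<in> {i..j-1}" "q \<in> {i..j-1}" using assms by auto
    ultimately have "d q - mu = 0" "d (q-1) - mu = 0" by simp_all
    then show False using qd assms by simp
  qed
  show ?thesis
  proof (cases "min a b \<le> mu \<and> mu \<le> max a b")
    case True
    then have e: "\<bar>mu - a\<bar> + \<bar>b - mu\<bar> = \<bar>b - a\<bar>" by (auto simp: abs_if)
    have "\<bar>b - a\<bar> < (\<Sum>k=i..j. \<bar>cv z k\<bar>)"
      using strict_abs_sum[of "{i..j}" kp kn "cv z"] assms total by simp
    then show ?thesis using e by (simp add: mu_def a_def b_def)
  next
    case False
    then consider "mu > max a b" | "mu < min a b" by linarith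
    then show ?thesis
    proof cases
      case 1
      obtain x where x: "x \<in> {i..j-1}" "d x - mu \<noteq> 0" using nz by blast
      obtain p where p: "p \<in> {i..j-1}" "d p - mu > 0"
        using exists_pos[OF _ dsum x] by auto
      have "\<bar>d p - a\<bar> + \<bar>b - d p\<bar> > \<bar>mu - a\<bar> + \<bar>b - mu\<bar>" using p 1 by auto
      moreover have "\<bar>d p - a\<bar> + \<bar>b - d p\<bar> \<le> (\<Sum>k=i..j. \<bar>cv z k\<bar>)" using part[of p] p assms by auto
      ultimately have "\<bar>mu - a\<bar> + \<bar>b - mu\<bar> < (\<Sum>k=i..j. \<bar>cv z k\<bar>)" by linarith
      then show ?thesis by (simp only: mu_def a_def b_def)
    next
      case 2
      obtain x where x: "x \<in> {i..j-1}" "(\<lambda>p. - (d p - mu)) x \<noteq> 0" using nz by auto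
      have ds2: "(\<Sum>p=i..j-1. - (d p - mu)) = 0" using dsum sum_negf[of "\<lambda>p. d p - mu" "{i..j-1}"] by simp
      obtain p where p: "p \<in> {i..j-1}" "- (d p - mu) > 0"
        using exists_pos[OF _ ds2 x] by auto
      have "\<bar>d p - a\<bar> + \<bar>b - d p\<bar> > \<bar>mu - a\<bar> + \<bar>b - mu\<bar>" using p 2 by auto
      moreover have "\<bar>d p - a\<bar> + \<bar>b - d p\<bar> \<le> (\<Sum>k=i..j. \<bar>cv z k\<bar>)" using part[of p] p assms by auto
      ultimately have "\<bar>mu - a\<bar> + \<bar>b - mu\<bar> < (\<Sum>k=i..j. \<bar>cv z k\<bar>)" by linarith
      then show ?thesis by (simp only: mu_def a_def b_def)
    qed
  qed
qed



lemma twin: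
  assumes "twin_union n M" "m \<in> M"
  shows "m+1 \<in> M \<or> (2 \<le> m \<and> m-1 \<in> M)"
proof -
  obtain T where T: "T \<subseteq> {1..n-1}" "M = (\<Union>i\<in>T. {i, i+1})" using assms(1) twin_union_def by auto
  then obtain t where t: "t \<in> T" "m = t \<or> m = t+1" using assms(2) by auto
  show ?thesis
  proof (cases "m = t")
    case True then show ?thesis using T t by auto
  next
    case False
    then have "m = t+1" using t by auto
    moreover have "t \<ge> 1" using T t by auto
    ultimately show ?thesis using T t by auto
  qed
qed

lemma interp:
  fixes z :: "nat \<Rightarrow> real"
  assumes "2 \<le> i" "i+2 \<le> j"
  defines "mu \<equiv> (z j - z i)/(real j - real i)"
  assumes z'_def: "z' = (\<lambda>l. if i < l \<and> l < j then z i + (real l - real i)*mu else z l)"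
  shows "(\<Sum>k=i..j. \<bar>cv z' k\<bar>) = \<bar>mu - (z i - z(i-1))\<bar> + \<bar>(z(j+1) - z j) - mu\<bar>"
    and "k < i \<or> j < k \<Longrightarrow> cv z' k = cv z k"
proof -
  have jr: "real j - real i > 0" using assms by simp
  have lin: "z' l = z i + (real l - real i)*mu" if "i \<le> l" "l \<le> j" for l
  proof (cases "i < l \<and> l < j")
    case True then show ?thesis by (simp add: z'_def)
  next
    case False
    then have "l = i \<or> l = j" using that by auto
    then show ?thesis
    proof
      assume "l = i" then show ?thesis using assms by (simp add: z'_def)
    next
      assume "l = j"
      then show ?thesis using assms jr by (simp add: z'_def mu_def)
    qed
  qed
  have ci: "cv z' i = mu - (z i - z(i-1))"
  proof -
    have "z' (i+1) = z i + mu" using lin[of "i+1"] assms by simp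
    moreover have "z' (i-1) = z (i-1)" "z' i = z i" using assms by (auto simp: z'_def)
    ultimately show ?thesis by (simp add: cv_def)
  qed
  have cj: "cv z' j = (z(j+1) - z j) - mu"
  proof -
    have "z' (j-1) = z i + (real (j-1) - real i)*mu" using lin[of "j-1"] assms by simp
    also have "\<dots> = z i + (real j - real i)*mu - mu" using assms(1,2) by (simp add: of_nat_diff algebra_simps)
    also have "\<dots> = z j - mu" using jr by (simp add: mu_def)
    finally have "z' (j-1) = z j - mu" .
    moreover have "z' (j+1) = z (j+1)" "z' j = z j" using assms by (auto simp: z'_def)
    ultimately show ?thesis by (simp add: cv_def)
  qed
  have cin: "cv z' k = 0" if "i < k" "k < j" for k
  proof -
    have "z' (k-1) = z i + (real (k-1) - real i)*mu" "z' k = z i + (real k - real i)*mu"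
      "z' (k+1) = z i + (real (k+1) - real i)*mu" using lin that by auto
    moreover have "real (k-1) = real k - 1" using that by (simp add: of_nat_diff)
    ultimately show ?thesis by (simp add: cv_def algebra_simps)
  qed
  have ij: "{i..j} = insert i (insert j {i<..<j})" using assms by auto
  have "(\<Sum>k=i..j. \<bar>cv z' k\<bar>) = \<bar>cv z' i\<bar> + \<bar>cv z' j\<bar> + (\<Sum>k\<in>{i<..<j}. \<bar>cv z' k\<bar>)"
    unfolding ij using assms by simp
  also have "(\<Sum>k\<in>{i<..<j}. \<bar>cv z' k\<bar>) = 0" using cin by simp
  finally show "(\<Sum>k=i..j. \<bar>cv z' k\<bar>) = \<bar>mu - (z i - z(i-1))\<bar> + \<bar>(z(j+1) - z j) - mu\<bar>"
    using ci cj by simp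
  assume k: "k < i \<or> j < k"
  then have "z' (k-1) = z (k-1)" "z' k = z k" "z' (k+1) = z (k+1)" by (auto simp: z'_def)
  then show "cv z' k = cv z k" by (simp add: cv_def)
qed



lemma opt_imp_sc:
  assumes n3: "n \<ge> 3" and Msub: "M \<subseteq> {1..n}" and tw: "twin_union n M"
    and opt: "is_optimal n M y z"
  shows "sign_consistent n M z"
proof (rule ccontr)
  assume "\<not> ?thesis"
  then obtain i j where cs: "consecutive_samples M i j"
    and n1: "\<not> (\<forall>k h. i \<le> k \<and> k \<le> j \<and> i \<le> h \<and> h \<le> j \<and>
                 2 \<le> k \<and> k \<le> n-1 \<and> 2 \<le> h \<and> h \<le> n-1 \<and>
                 sgn_curv z k \<noteq> 0 \<and> sgn_curv z h \<noteq> 0 \<longrightarrow> sgn_curv z k = sgn_curv z h)"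
    and n2: "\<not> (\<forall>k. i < k \<and> k < j \<longrightarrow> sgn_curv z k = 0)"
    unfolding sign_consistent_def by blast
  from n2 obtain q where q: "i < q" "q < j" "cv z q \<noteq> 0" by (auto simp: sgn_curv_cv sgn_if split: if_splits)
  from n1 obtain k h where kh: "i \<le> k" "k \<le> j" "i \<le> h" "h \<le> j" "2 \<le> k" "k \<le> n-1" "2 \<le> h" "h \<le> n-1"
    "cv z k \<noteq> 0" "cv z h \<noteq> 0" "sgn (cv z k) \<noteq> sgn (cv z h)"
    by (auto simp: sgn_curv_cv sgn_if split: if_splits)
  obtain kp kn where kpn: "i \<le> kp" "kp \<le> j" "cv z kp > 0" "i \<le> kn" "kn \<le> j" "cv z kn < 0"
  proof (cases "cv z k > 0")
    case True
    then have "cv z h < 0" using kh by (auto simp: sgn_if split: if_splits)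
    then show ?thesis using that[of k h] kh True by auto
  next
    case False
    then have "cv z k < 0" using kh by auto
    moreover have "cv z h > 0" using kh calculation by (auto simp: sgn_if split: if_splits)
    ultimately show ?thesis using that[of h k] kh by auto
  qed
  have ij: "i + 2 \<le> j" using q by simp
  have iM: "i \<in> M" "j \<in> M" and nb: "\<forall>m\<in>M. \<not> (i < m \<and> m < j)" using cs consecutive_samples_def by auto
  have "i+1 \<notin> M" using nb ij by auto
  then have i2: "2 \<le> i" using twin[OF tw iM(1)] by auto
  have "j-1 \<notin> M" using nb ij by auto
  then have "j+1 \<in> M" using twin[OF tw iM(2)] by auto
  then have jn: "j + 1 \<le> n" using Msub by auto
  define mu where "mu = (z j - z i)/(real j - real i)"
  define z' where "z' = (\<lambda>l. if i < l \<and> l < j then z i + (real l - real i)*mu else z l)"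
  have se: "sample_eq M z' y"
    using opt nb unfolding is_optimal_def sample_eq_def z'_def by auto
  then have le: "l1_D n z \<le> l1_D n z'" using opt is_optimal_def by blast
  define A where "A = {2..n-1}"
  define B where "B = {i..j}"
  have BA: "B \<subseteq> A" using i2 jn by (auto simp: A_def B_def)
  have splitz: "(\<Sum>k\<in>A. \<bar>cv w k\<bar>) = (\<Sum>k\<in>A-B. \<bar>cv w k\<bar>) + (\<Sum>k\<in>B. \<bar>cv w k\<bar>)" for w
    using sum.subset_diff[OF BA] by (simp add: A_def)
  have rest: "(\<Sum>k\<in>A-B. \<bar>cv z' k\<bar>) = (\<Sum>k\<in>A-B. \<bar>cv z k\<bar>)"
  proof (rule sum.cong)
    fix k assume "k \<in> A - B"
    then have "k < i \<or> j < k" by (auto simp: B_def)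
    then show "\<bar>cv z' k\<bar> = \<bar>cv z k\<bar>" using interp(2)[OF i2 ij z'_def[unfolded mu_def]] by simp
  qed simp
  have bz': "(\<Sum>k\<in>B. \<bar>cv z' k\<bar>) = \<bar>mu - (z i - z(i-1))\<bar> + \<bar>(z(j+1) - z j) - mu\<bar>"
    using interp(1)[OF i2 ij z'_def[unfolded mu_def]] by (simp add: B_def mu_def)
  have bz: "(\<Sum>k\<in>B. \<bar>cv z k\<bar>) > \<bar>mu - (z i - z(i-1))\<bar> + \<bar>(z(j+1) - z j) - mu\<bar>"
    using core[of i j kp z kn q] i2 ij kpn q by (simp add: B_def mu_def)
  have "l1_D n z' < l1_D n z"
    unfolding l1_D_cv[OF n3] A_def[symmetric] splitz rest using bz bz' by simp
  then show False using le by simp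
qed



definition Gp :: "nat set \<Rightarrow> nat \<Rightarrow> nat \<Rightarrow> bool" where
  "Gp M i j \<longleftrightarrow> consecutive_samples M i j \<and> i + 2 \<le> j"

definition gapw :: "(nat \<Rightarrow> real) \<Rightarrow> nat \<Rightarrow> nat \<Rightarrow> nat \<Rightarrow> real" where
  "gapw z i j k = (if (\<forall>q. i < q \<and> q < j \<longrightarrow> cv z q = 0)
     then sgn (cv z i) + (sgn (cv z j) - sgn (cv z i)) * ((real k - real i) / (real j - real i))
     else sgn (cv z (SOME q. i < q \<and> q < j \<and> cv z q \<noteq> 0)))"

definition wc :: "nat set \<Rightarrow> (nat \<Rightarrow> real) \<Rightarrow> nat \<Rightarrow> real" where
  "wc M z k = (if \<exists>p. Gp M (fst p) (snd p) \<and> fst p \<le> k \<and> k \<le> snd p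
     then (let p = SOME p. Gp M (fst p) (snd p) \<and> fst p \<le> k \<and> k \<le> snd p in gapw z (fst p) (snd p) k)
     else sgn (cv z k))"

lemma uniq_aux:
  assumes tw: "twin_union n M" and G: "Gp M i j" "Gp M i' j'" and k: "i \<le> k" "k \<le> j" "i' \<le> k" "k \<le> j'"
    and le: "i \<le> i'"
  shows "i = i' \<and> j = j'"
proof -
  have c: "i \<in> M" "j \<in> M" "i < j" "\<forall>m\<in>M. \<not> (i < m \<and> m < j)" "i+2 \<le> j"
    using G(1) unfolding Gp_def consecutive_samples_def by auto
  have c': "i' \<in> M" "j' \<in> M" "i' < j'" "\<forall>m\<in>M. \<not> (i' < m \<and> m < j')" "i'+2 \<le> j'"
    using G(2) unfolding Gp_def consecutive_samples_def by auto
  show ?thesis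
  proof (cases "i = i'")
    case True
    have "\<not> (i' < j \<and> j < j')" using c'(4) c(2) by blast
    moreover have "\<not> (i < j' \<and> j' < j)" using c(4) c'(2) by blast
    ultimately show ?thesis using True c(3) c'(3) by linarith
  next
    case False
    then have "i < i'" using le by simp
    moreover have "\<not> (i < i' \<and> i' < j)" using c(4) c'(1) by blast
    ultimately have "j \<le> i'" by linarith
    then have kk: "k = j" "k = i'" using k by auto
    have "k - 1 \<notin> M" using c kk by auto
    moreover have "k + 1 \<notin> M" using c' kk by auto
    ultimately show ?thesis using twin[OF tw, of k] c kk by auto
  qed
qed

lemma uniq:
  assumes tw: "twin_union n M" and G: "Gp M i j" "Gp M i' j'" and k: "i \<le> k" "k \<le> j" "i' \<le> k" "k \<le> j'"
  shows "i = i' \<and> j = j'"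
  using uniq_aux[OF tw G k] uniq_aux[OF tw G(2,1) k(3,4,1,2)] by linarith

lemma wc_gap:
  assumes tw: "twin_union n M" and G: "Gp M i j" and k: "i \<le> k" "k \<le> j"
  shows "wc M z k = gapw z i j k"
proof -
  let ?P = "\<lambda>p. Gp M (fst p) (snd p) \<and> fst p \<le> k \<and> k \<le> snd p"
  have ex: "\<exists>p. ?P p" using G k by (intro exI[of _ "(i,j)"]) auto
  then have "?P (SOME p. ?P p)" by (rule someI_ex)
  then have "fst (SOME p. ?P p) = i \<and> snd (SOME p. ?P p) = j" using uniq[OF tw G] k by blast
  moreover have "wc M z k = gapw z (fst (SOME p. ?P p)) (snd (SOME p. ?P p)) k"
    unfolding wc_def using ex by (simp only: if_True Let_def)
  ultimately show ?thesis by simp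
qed

lemma wc_out:
  assumes "\<not> (\<exists>i j. Gp M i j \<and> i \<le> k \<and> k \<le> j)"
  shows "wc M z k = sgn (cv z k)"
  using assms unfolding wc_def by auto

lemma sgn_bound: "\<bar>sgn (x::real)\<bar> \<le> 1" by (simp add: sgn_if)

lemma gapw_bound:
  assumes "i < j" "i \<le> k" "k \<le> j"
  shows "\<bar>gapw z i j k\<bar> \<le> 1"
proof -
  define t where "t = (real k - real i) / (real j - real i)"
  have t: "0 \<le> t" "t \<le> 1" using assms by (auto simp: t_def divide_le_eq_1)
  have main: "\<bar>s1 + (s2 - s1) * t\<bar> \<le> 1" if "\<bar>s1\<bar> \<le> 1" "\<bar>s2\<bar> \<le> 1" for s1 s2 :: real
  proof -
    have e: "s1 + (s2 - s1) * t = (1 - t) * s1 + t * s2" by (simp add: algebra_simps)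
    have "(1 - t) * s1 \<le> (1 - t) * 1" "t * s2 \<le> t * 1"
      using that t by (intro mult_left_mono; auto)+
    moreover have "(1 - t) * (-1) \<le> (1 - t) * s1" "t * (-1) \<le> t * s2"
      using that t by (intro mult_left_mono; auto)+
    ultimately show ?thesis unfolding e by auto
  qed
  show ?thesis unfolding gapw_def t_def[symmetric]
    using main[OF sgn_bound sgn_bound] sgn_bound by simp
qed

lemma wc_bound:
  assumes tw: "twin_union n M"
  shows "\<bar>wc M z k\<bar> \<le> 1"
proof (cases "\<exists>i j. Gp M i j \<and> i \<le> k \<and> k \<le> j")
  case True
  then obtain i j where ij: "Gp M i j" "i \<le> k" "k \<le> j" by blast
  then have "wc M z k = gapw z i j k" by (rule wc_gap[OF tw])
  moreover have "i < j" using ij(1) unfolding Gp_def by simp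
  ultimately show ?thesis using gapw_bound[of i j k z] ij by simp
next
  case False
  then show ?thesis using wc_out[OF False] sgn_bound by simp
qed

lemma sgn_mult_self: "sgn (x::real) * x = \<bar>x\<bar>"
  by (simp add: sgn_if abs_if)

lemma wc_B:
  assumes tw: "twin_union n M" and Msub: "M \<subseteq> {1..n}" and sc: "sign_consistent n M z"
    and k: "2 \<le> k" "k \<le> n-1"
  shows "wc M z k * cv z k = \<bar>cv z k\<bar>"
proof (cases "\<exists>i j. Gp M i j \<and> i \<le> k \<and> k \<le> j")
  case True
  then obtain i j where ij: "Gp M i j" "i \<le> k" "k \<le> j" by blast
  then have w: "wc M z k = gapw z i j k" by (rule wc_gap[OF tw])
  have cs: "consecutive_samples M i j" "i + 2 \<le> j" using ij(1) unfolding Gp_def by auto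
  have "i \<in> M" "j \<in> M" using cs(1) unfolding consecutive_samples_def by auto
  then have i1: "1 \<le> i" and jn: "j \<le> n" using Msub by auto
  have jr: "real j - real i > 0" using cs by simp
  show ?thesis
  proof (cases "\<forall>q. i < q \<and> q < j \<longrightarrow> cv z q = 0")
    case True
    then have g: "gapw z i j k = sgn (cv z i) + (sgn (cv z j) - sgn (cv z i)) * ((real k - real i) / (real j - real i))"
      unfolding gapw_def by simp
    consider "k = i" | "k = j" | "i < k \<and> k < j" using ij by linarith
    then show ?thesis
    proof cases
      case 1 then show ?thesis using w g sgn_mult_self by simp
    next
      case 2 then show ?thesis using w g sgn_mult_self jr by simp
    next
      case 3 then show ?thesis using True by simp
    qed
  next
    case False
    let ?Q = "\<lambda>q. i < q \<and> q < j \<and> cv z q \<noteq> 0"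
    have ex: "\<exists>q. ?Q q" using False by auto
    define q0 where "q0 = (SOME q. ?Q q)"
    have q0: "?Q q0" unfolding q0_def using ex by (rule someI_ex)
    have g: "gapw z i j k = sgn (cv z q0)" by (simp only: gapw_def q0_def False if_False)
    have disj: "(\<forall>k h. i \<le> k \<and> k \<le> j \<and> i \<le> h \<and> h \<le> j \<and>
                 2 \<le> k \<and> k \<le> n-1 \<and> 2 \<le> h \<and> h \<le> n-1 \<and>
                 sgn_curv z k \<noteq> 0 \<and> sgn_curv z h \<noteq> 0 \<longrightarrow> sgn_curv z k = sgn_curv z h)
         \<or> (\<forall>k. i < k \<and> k < j \<longrightarrow> sgn_curv z k = 0)"
      using sc cs(1) unfolding sign_consistent_def by blast
    have "\<not> (\<forall>k. i < k \<and> k < j \<longrightarrow> sgn_curv z k = 0)"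
      using q0 by (auto simp: sgn_curv_cv sgn_if split: if_splits)
    then have all: "\<forall>k h. i \<le> k \<and> k \<le> j \<and> i \<le> h \<and> h \<le> j \<and>
                 2 \<le> k \<and> k \<le> n-1 \<and> 2 \<le> h \<and> h \<le> n-1 \<and>
                 sgn_curv z k \<noteq> 0 \<and> sgn_curv z h \<noteq> 0 \<longrightarrow> sgn_curv z k = sgn_curv z h"
      using disj by blast
    show ?thesis
    proof (cases "cv z k = 0")
      case True then show ?thesis by simp
    next
      case False
      have "2 \<le> q0" "q0 \<le> n - 1" using q0 i1 jn by auto
      then have "sgn_curv z k = sgn_curv z q0"
        using all[rule_format, of k q0] ij k q0 False
        by (auto simp: sgn_curv_cv sgn_if split: if_splits)
      then have "sgn (cv z q0) = sgn (cv z k)" by (simp add: sgn_curv_cv)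
      then show ?thesis using w g sgn_mult_self[of "cv z k"] by simp
    qed
  qed
next
  case False
  then show ?thesis using wc_out[OF False] sgn_mult_self by simp
qed

lemma wc_C:
  assumes tw: "twin_union n M" and Msub: "M \<subseteq> {1..n}" and M1: "1 \<in> M" and Mn: "n \<in> M"
    and l: "2 \<le> l" "l \<le> n-1" "l \<notin> M"
  shows "cv (wc M z) l = 0"
proof -
  define L where "L = {m\<in>M. m < l}"
  define R where "R = {m\<in>M. l < m}"
  have fin: "finite L" "finite R" unfolding L_def R_def
    using finite_subset[OF _ finite_atLeastAtMost[of 1 n]] Msub by auto
  have ne: "1 \<in> L" "n \<in> R" using M1 Mn l unfolding L_def R_def by auto
  define i where "i = Max L"
  define j where "j = Min R"
  have iL: "i \<in> L" unfolding i_def using fin ne by (intro Max_in) auto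
  have jR: "j \<in> R" unfolding j_def using fin ne by (intro Min_in) auto
  have iM: "i \<in> M" "i < l" using iL unfolding L_def by auto
  have jM: "j \<in> M" "l < j" using jR unfolding R_def by auto
  have nb: "\<not> (i < m \<and> m < j)" if "m \<in> M" for m
  proof
    assume m: "i < m \<and> m < j"
    show False
    proof (cases "m < l")
      case True
      then have "m \<in> L" using that unfolding L_def by auto
      then have "m \<le> i" unfolding i_def using fin by simp
      then show False using m by simp
    next
      case False
      then have "l < m" using l that by (cases "m = l") auto
      then have "m \<in> R" using that unfolding R_def by auto
      then have "j \<le> m" unfolding j_def using fin by simp
      then show False using m by simp
    qed
  qed
  have G: "Gp M i j" unfolding Gp_def consecutive_samples_def using iM jM nb by auto
  have w1: "wc M z (l-1) = gapw z i j (l-1)" by (rule wc_gap[OF tw G]) (use iM jM in auto)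
  have w2: "wc M z l = gapw z i j l" by (rule wc_gap[OF tw G]) (use iM jM in auto)
  have w3: "wc M z (l+1) = gapw z i j (l+1)" by (rule wc_gap[OF tw G]) (use iM jM in auto)
  have jr: "real j - real i \<noteq> 0" using iM jM by simp
  have r1: "real (l-1) = real l - 1" using l by (simp add: of_nat_diff)
  have "gapw z i j (l-1) - 2 * gapw z i j l + gapw z i j (l+1) = 0"
  proof (cases "\<forall>q. i < q \<and> q < j \<longrightarrow> cv z q = 0")
    case True
    define A where "A = sgn (cv z i)"
    define B where "B = sgn (cv z j) - sgn (cv z i)"
    define t where "t = (real l - real i) / (real j - real i)"
    define u where "u = 1 / (real j - real i)"
    have e1: "(real l - 1 - real i) / (real j - real i) = t - u" unfolding t_def u_def
      by (simp add: diff_divide_distrib)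
    have e3: "(real l + 1 - real i) / (real j - real i) = t + u" unfolding t_def u_def
      by (simp add: add_divide_distrib diff_divide_distrib)
    have r3: "real (l+1) = real l + 1" by simp
    have gg: "gapw z i j x = A + B * ((real x - real i) / (real j - real i))" for x
      by (simp only: gapw_def if_P[OF True] A_def B_def)
    have "gapw z i j (l-1) = A + B * (t - u)" "gapw z i j l = A + B * t" "gapw z i j (l+1) = A + B * (t + u)"
      by (simp only: gg r1 r3 e1 e3 t_def)+
    then show ?thesis by (simp add: algebra_simps)
  next
    case False
    have gg: "gapw z i j x = sgn (cv z (SOME q. i < q \<and> q < j \<and> cv z q \<noteq> 0))" for x
      by (simp only: gapw_def False if_False)
    then show ?thesis by simp
  qed
  then show ?thesis unfolding cv_def using w1 w2 w3 by simp
qed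

lemma sbp:
  fixes w e :: "nat \<Rightarrow> real"
  shows "(\<Sum>k=2..Suc m. w k * cv e k) - (\<Sum>k=2..Suc m. e k * cv w k)
    = (w (Suc m) * e (Suc m + 1) - w (Suc m + 1) * e (Suc m)) - (w 1 * e 2 - w 2 * e 1)"
proof (induction m)
  case 0
  then show ?case by (simp add: numeral_2_eq_2)
next
  case (Suc m)
  have s: "{2..Suc (Suc m)} = insert (Suc (Suc m)) {2..Suc m}" by auto
  show ?case unfolding s using Suc by (simp add: cv_def algebra_simps)
qed



lemma sc_imp_opt:
  assumes n3: "n \<ge> 3" and Msub: "M \<subseteq> {1..n}" and tw: "twin_union n M"
    and M1: "1 \<in> M" and Mn: "n \<in> M" and se: "sample_eq M z y" and sc: "sign_consistent n M z"
  shows "is_optimal n M y z"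
  unfolding is_optimal_def
proof (intro conjI allI impI)
  show "sample_eq M z y" by fact
  fix z' assume se': "sample_eq M z' y"
  define e where "e k = z k - z' k" for k
  define w where "w = wc M z"
  have e0: "e m = 0" if "m \<in> M" for m using se se' that unfolding sample_eq_def e_def by auto
  have M2: "2 \<in> M" using twin[OF tw M1] by (auto simp: numeral_2_eq_2)
  have "n + 1 \<notin> M" using Msub by auto
  then have Mn1: "n - 1 \<in> M" using twin[OF tw Mn] by auto
  have cve: "cv e k = cv z k - cv z' k" for k by (simp add: cv_def e_def algebra_simps)
  define m where "m = n - 2"
  have sm: "Suc m = n - 1" "Suc m + 1 = n" using n3 by (auto simp: m_def)
  have zero2: "(\<Sum>k=2..n-1. e k * cv w k) = 0"
  proof (rule sum.neutral, rule ballI)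
    fix k assume k: "k \<in> {2..n-1}"
    show "e k * cv w k = 0"
    proof (cases "k \<in> M")
      case True then show ?thesis using e0 by simp
    next
      case False then show ?thesis using wc_C[OF tw Msub M1 Mn] k by (simp add: w_def)
    qed
  qed
  have "(\<Sum>k=2..n-1. w k * cv e k) - (\<Sum>k=2..n-1. e k * cv w k)
      = (w (n-1) * e n - w n * e (n-1)) - (w 1 * e 2 - w 2 * e 1)"
    using sbp[of w e m] unfolding sm(1) sm(2)[unfolded sm(1)] .
  also have "\<dots> = 0" using e0 M1 M2 Mn Mn1 by simp
  finally have zero1: "(\<Sum>k=2..n-1. w k * cv e k) = 0" using zero2 by simp
  have "l1_D n z = (\<Sum>k=2..n-1. w k * cv z k)"
    unfolding l1_D_cv[OF n3] w_def using wc_B[OF tw Msub sc] by (intro sum.cong) auto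
  also have "\<dots> = (\<Sum>k=2..n-1. w k * cv z' k) + (\<Sum>k=2..n-1. w k * cv e k)"
    by (simp add: cve sum.distrib[symmetric] algebra_simps)
  also have "\<dots> = (\<Sum>k=2..n-1. w k * cv z' k)" using zero1 by simp
  also have "\<dots> \<le> (\<Sum>k=2..n-1. \<bar>cv z' k\<bar>)"
  proof (rule sum_mono)
    fix k
    have "w k * cv z' k \<le> \<bar>w k\<bar> * \<bar>cv z' k\<bar>" by (simp add: abs_mult[symmetric])
    also have "\<dots> \<le> 1 * \<bar>cv z' k\<bar>" using wc_bound[OF tw] unfolding w_def
      by (intro mult_right_mono) auto
    finally show "w k * cv z' k \<le> \<bar>cv z' k\<bar>" by simp
  qed
  also have "\<dots> = l1_D n z'" using l1_D_cv[OF n3] by simp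
  finally show "l1_D n z \<le> l1_D n z'" .
qed

theorem theorem1:
  fixes n :: nat and M :: "nat set" and y z :: "nat \<Rightarrow> real"
  assumes "n \<ge> 3"
    and "M \<subseteq> {1..n}"
    and "twin_union n M"
    and "1 \<in> M" and "n \<in> M"
    and "sample_eq M z y"
  shows "is_optimal n M y z \<longleftrightarrow> sign_consistent n M z"
  using opt_imp_sc[OF assms(1,2,3)] sc_imp_opt[OF assms] by blast

end
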